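(* For every integer $h\ge 0$, the generating function $M^{\le h}(z)=\sum_{n\ge0} m_{n,h} z^n$, where $m_{n,h}$ is the number of Motzkin paths of length $n$ and height at most $h$, satisfies $$M^{\le h}(z)=(1+v+v^2)\,\frac{1-v^{2h+2}}{1-v^{2h+4}},$$ and the generating function $N^{\le h}(z)=\sum_{n\ge0} n_{n,h} z^n$, where $n_{n,h}$ is the number of Motzkin paths of length $n$ and height at most $h$ having no horizontal step on level $h$, satisfies $$N^{\le h}(z)=(1+v+v^2)\,\frac{1-v^{2h+1}}{1-v^{2h+3}}.$$ Both identities hold as identities of formal power series in $z$.
   Context: A Motzkin path of length $n$ is a sequence of $n$ steps, each an up-step $(1,1)$, a down-step $(1,-1)$ or a horizontal step $(1,0)$, starting at $(0,0)$, ending at $(n,0)$, and never going below the $x$-axis. Its height is the maximal $y$-coordinate reached. A horizontal step on level $j$ is a horizontal step from $(x,j)$ to $(x+1,j)$. Throughout, $v=v(z)=\frac{1-z-\sqrt{1-2z-3z^2}}{2z}=z+z^2+\cdots$ denotes the formal power series with $v(0)=0$ satisfying $z=\frac{v}{1+v+v^2}$. *)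

theory Defs
  imports "HOL-Computational_Algebra.Formal_Power_Series"
begin

datatype step = U | D | H

fun step_val :: "step \<Rightarrow> int" where
  "step_val U = 1" | "step_val D = -1" | "step_val H = 0"

definition ht :: "step list \<Rightarrow> nat \<Rightarrow> int" where
  "ht xs k = sum_list (map step_val (take k xs))"

definition motzkin :: "step list \<Rightarrow> bool" where
  "motzkin xs \<longleftrightarrow> (\<forall>k\<le>length xs. 0 \<le> ht xs k) \<and> ht xs (length xs) = 0"

definition height_le :: "step list \<Rightarrow> nat \<Rightarrow> bool" where
  "height_le xs h \<longleftrightarrow> (\<forall>k\<le>length xs. ht xs k \<le> int h)"

definition no_hor_on_level :: "step list \<Rightarrow> nat \<Rightarrow> bool" where
  "no_hor_on_level xs h \<longleftrightarrow> (\<forall>k<length xs. xs ! k = H \<longrightarrow> ht xs k \<noteq> int h)"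

definition m_count :: "nat \<Rightarrow> nat \<Rightarrow> nat" where
  "m_count n h = card {xs. length xs = n \<and> motzkin xs \<and> height_le xs h}"

definition n_count :: "nat \<Rightarrow> nat \<Rightarrow> nat" where
  "n_count n h = card {xs. length xs = n \<and> motzkin xs \<and> height_le xs h \<and> no_hor_on_level xs h}"

text \<open>v: the unique power series with v(0)=0 and z = v/(1+v+v^2), i.e. z(1+v+v^2) = v\<close>
definition vser :: "real fps" where
  "vser = (THE v. fps_nth v 0 = 0 \<and> fps_X * (1 + v + v^2) = v)"

definition Mle :: "nat \<Rightarrow> real fps" where
  "Mle h = Abs_fps (\<lambda>n. real (m_count n h))"

definition Nle :: "nat \<Rightarrow> real fps" where
  "Nle h = Abs_fps (\<lambda>n. real (n_count n h))"

end

theory Submission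
  imports Defs
begin

unbundle fps_syntax


fun wk :: "int \<Rightarrow> int \<Rightarrow> bool \<Rightarrow> int \<Rightarrow> int \<Rightarrow> step list \<Rightarrow> bool" where
  "wk l h b a e [] = (l \<le> a \<and> a \<le> h \<and> a = e)"
| "wk l h b a e (x#xs) = (l \<le> a \<and> a \<le> h \<and> (x = H \<longrightarrow> b \<or> a \<noteq> h) \<and> wk l h b (a + step_val x) e xs)"

lemma ht_0[simp]: "ht xs 0 = 0" by (simp add: ht_def)
lemma ht_Cons_Suc[simp]: "ht (x#xs) (Suc k) = step_val x + ht xs k" by (simp add: ht_def)

lemma all_le_Suc: "(\<forall>k\<le>Suc n. P k) \<longleftrightarrow> P 0 \<and> (\<forall>k\<le>n. P (Suc k))"
  by (metis Suc_le_mono le0 not0_implies_Suc)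
lemma all_less_Suc: "(\<forall>k<Suc n. P k) \<longleftrightarrow> P 0 \<and> (\<forall>k<n. P (Suc k))"
  by (metis Suc_less_eq not0_implies_Suc zero_less_Suc)

lemma P1_Cons: "(\<forall>k\<le>length (x#xs). l \<le> a + ht (x#xs) k \<and> a + ht (x#xs) k \<le> h) \<longleftrightarrow>
   l \<le> a \<and> a \<le> h \<and> (\<forall>k\<le>length xs. l \<le> (a + step_val x) + ht xs k \<and> (a + step_val x) + ht xs k \<le> h)"
  unfolding length_Cons all_le_Suc by (simp add: add.assoc)

lemma P3_Cons: "(\<forall>k<length (x#xs). (x#xs)!k = H \<longrightarrow> a + ht (x#xs) k \<noteq> h) \<longleftrightarrow>
   (x = H \<longrightarrow> a \<noteq> h) \<and> (\<forall>k<length xs. xs!k = H \<longrightarrow> (a + step_val x) + ht xs k \<noteq> h)"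
  unfolding length_Cons all_less_Suc by (simp add: add.assoc)

lemma wk_char: "wk l h b a e xs \<longleftrightarrow> (\<forall>k\<le>length xs. l \<le> a + ht xs k \<and> a + ht xs k \<le> h)
   \<and> a + ht xs (length xs) = e \<and> (\<not>b \<longrightarrow> (\<forall>k<length xs. xs!k = H \<longrightarrow> a + ht xs k \<noteq> h))"
proof (induction xs arbitrary: a)
  case Nil
  then show ?case by auto
next
  case (Cons x xs)
  have e: "a + ht (x#xs) (length (x#xs)) = (a + step_val x) + ht xs (length xs)" by simp
  show ?case
    unfolding wk.simps Cons.IH P1_Cons P3_Cons e by blast
qed

lemma wk_range: "wk l h b a e xs \<Longrightarrow> l \<le> a \<and> a \<le> h"
  by (cases xs) auto

lemma wk_append: "wk l h b a e (xs @ ys) \<longleftrightarrow> (\<exists>m. wk l h b a m xs \<and> wk l h b m e ys)"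
proof (induction xs arbitrary: a)
  case Nil
  then show ?case using wk_range by fastforce
next
  case (Cons x xs)
  then show ?case by auto
qed

lemma wk_shift: "wk (l+c) (h+c) b (a+c) (e+c) xs = wk l h b a e xs"
proof (induction xs arbitrary: a)
  case Nil
  then show ?case by auto
next
  case (Cons x xs)
  have eq: "a + c + step_val x = (a + step_val x) + c" by simp
  show ?case by (simp only: wk.simps eq Cons.IH[of "a + step_val x"]) simp
qed

lemma wk_mono: "wk l' h b a e xs \<Longrightarrow> l \<le> l' \<Longrightarrow> wk l h b a e xs"
  by (induction xs arbitrary: a) auto

lemma wk_first_return: "wk 0 h b a 0 ys \<Longrightarrow> 1 \<le> a \<Longrightarrow>
   \<exists>p q. ys = p @ D # q \<and> wk 1 h b a 1 p \<and> wk 0 h b 0 0 q"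
proof (induction ys arbitrary: a)
  case Nil
  then show ?case by simp
next
  case (Cons x zs)
  show ?case
  proof (cases "x = D \<and> a = 1")
    case True
    then show ?thesis using Cons.prems by (intro exI[of _ "[]"] exI[of _ zs]) auto
  next
    case False
    have w: "wk 0 h b (a + step_val x) 0 zs" and r: "a \<le> h" "x = H \<longrightarrow> b \<or> a \<noteq> h"
      using Cons.prems by auto
    have "1 \<le> a + step_val x" using False Cons.prems(2) by (cases x) auto
    from Cons.IH[OF w this] obtain p q where "zs = p @ D # q" "wk 1 h b (a + step_val x) 1 p" "wk 0 h b 0 0 q"
      by blast
    then show ?thesis using r Cons.prems(2) by (intro exI[of _ "x#p"] exI[of _ q]) auto
  qed
qed

lemma wk_unique: "wk 1 h b a 1 p \<Longrightarrow> wk 1 h b a 1 p' \<Longrightarrow> p @ D # q = p' @ D # q' \<Longrightarrow> p = p'"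
proof (induction p arbitrary: a p')
  case Nil
  then show ?case by (cases p') (auto dest: wk_range)
next
  case (Cons x r)
  then show ?case by (cases p') (auto dest: wk_range)
qed




lemma v_exists: "\<exists>v::real fps. v $ 0 = 0 \<and> fps_X * (1 + v + v^2) = v"
proof -
  define q :: "real fps" where "q = 1 + fps_X + fps_X^2"
  define g where "g = fps_X * inverse q"
  have q0: "q $ 0 = 1" by (simp add: q_def)
  have g0: "g $ 0 = 0" by (simp add: g_def)
  have g1: "g $ 1 = 1" using q0 by (simp add: g_def)
  define w where "w = fps_inv g"
  have w0: "w $ 0 = 0" by (simp add: w_def fps_inv_def)
  have gw: "g oo w = fps_X" unfolding w_def by (rule fps_inv_right) (use g0 g1 in auto)
  have "g oo w = w * (inverse q oo w)"
    unfolding g_def by (simp add: fps_compose_mult_distrib[OF w0] w0)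
  moreover have "(inverse q oo w) * (q oo w) = 1"
    using fps_compose_mult_distrib[OF w0, of "inverse q" q, symmetric] inverse_mult_eq_1[of q] q0
    by simp
  moreover have "q oo w = 1 + w + w^2"
    unfolding q_def by (simp add: fps_compose_add_distrib fps_compose_power[OF w0, symmetric] w0)
  ultimately have "fps_X * (1 + w + w^2) = w"
    using gw by (metis mult.assoc mult.right_neutral)
  then show ?thesis using w0 by blast
qed

lemma v_unique:
  fixes v w :: "real fps"
  assumes "v $ 0 = 0" "fps_X * (1 + v + v^2) = v" "w $ 0 = 0" "fps_X * (1 + w + w^2) = w"
  shows "v = w"
proof (rule fps_ext)
  fix n show "v $ n = w $ n"
  proof (induction n rule: less_induct)
    case (less n)
    show ?case
    proof (cases n)
      case 0 then show ?thesis using assms by simp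
    next
      case (Suc m)
      have "(fps_X * (1 + v + v^2)) $ Suc m = (1 + v + v^2) $ m" by simp
      also have "\<dots> = 1 $ m + v $ m + (\<Sum>i=0..m. v$i * v$(m-i))"
        by (simp add: power2_eq_square fps_mult_nth)
      finally have ev: "v $ Suc m = 1 $ m + v $ m + (\<Sum>i=0..m. v$i * v$(m-i))"
        using assms by simp
      have "(fps_X * (1 + w + w^2)) $ Suc m = (1 + w + w^2) $ m" by simp
      also have "\<dots> = 1 $ m + w $ m + (\<Sum>i=0..m. w$i * w$(m-i))"
        by (simp add: power2_eq_square fps_mult_nth)
      finally have ew: "w $ Suc m = 1 $ m + w $ m + (\<Sum>i=0..m. w$i * w$(m-i))"
        using assms by simp
      have "(\<Sum>i=0..m. v$i * v$(m-i)) = (\<Sum>i=0..m. w$i * w$(m-i))"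
        by (rule sum.cong) (use less Suc in auto)
      then show ?thesis using ev ew less Suc by simp
    qed
  qed
qed

lemma vser_props: "vser $ 0 = 0 \<and> fps_X * (1 + vser + vser^2) = vser"
proof -
  have "\<exists>!v::real fps. v $ 0 = 0 \<and> fps_X * (1 + v + v^2) = v"
    using v_exists v_unique by blast
  then show ?thesis unfolding vser_def by (rule theI')
qed



definition S :: "int \<Rightarrow> int \<Rightarrow> bool \<Rightarrow> nat \<Rightarrow> step list set" where
  "S l h b n = {xs. length xs = n \<and> wk l h b l l xs}"

lemma UNIV_step: "(UNIV :: step set) = {U, D, H}"
  using step.exhaust by auto

lemma finite_S: "finite (S l h b n)"
proof -
  have "S l h b n \<subseteq> {xs. set xs \<subseteq> UNIV \<and> length xs = n}" by (auto simp: S_def)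
  moreover have "finite {xs. set xs \<subseteq> (UNIV::step set) \<and> length xs = n}"
    by (rule finite_lists_length_eq) (simp add: UNIV_step)
  ultimately show ?thesis by (rule finite_subset)
qed

lemma S_0: "0 \<le> h \<Longrightarrow> S 0 h b 0 = {[]}"
  by (auto simp: S_def)

lemma S_dec: assumes h: "0 \<le> h"
  shows "S 0 h b (Suc m) = (if b \<or> h \<noteq> 0 then Cons H ` S 0 h b m else {}) \<union>
     (\<Union>i\<in>{..<m}. (\<lambda>(p,q). U # p @ D # q) ` (S 1 h b i \<times> S 0 h b (m - 1 - i)))"
    (is "?L = ?A \<union> ?B")
proof (rule set_eqI)
  fix xs
  show "xs \<in> ?L \<longleftrightarrow> xs \<in> ?A \<union> ?B"
  proof
    assume xs: "xs \<in> ?L"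
    then obtain x ys where xs_def: "xs = x # ys" and len: "length ys = m" and w: "wk 0 h b 0 0 (x # ys)"
      by (cases xs) (auto simp: S_def)
    show "xs \<in> ?A \<union> ?B"
    proof (cases x)
      case U
      then have "wk 0 h b 1 0 ys" using w by simp
      from wk_first_return[OF this] obtain p q where
        pq: "ys = p @ D # q" "wk 1 h b 1 1 p" "wk 0 h b 0 0 q" by auto
      have "length p < m" "length q = m - 1 - length p" using len pq(1) by auto
      then have "xs \<in> ?B" using pq U xs_def
        by (auto simp: S_def intro!: bexI[of _ "length p"] image_eqI[of _ _ "(p,q)"])
      then show ?thesis by blast
    next
      case D
      then show ?thesis using w wk_range[of 0 h b "-1" 0 ys] by simp
    next
      case H
      then show ?thesis using w len xs_def by (auto simp: S_def)
    qed
  next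
    assume "xs \<in> ?A \<union> ?B"
    then show "xs \<in> ?L"
    proof
      assume "xs \<in> ?A" then show ?thesis using h by (auto simp: S_def split: if_splits)
    next
      assume "xs \<in> ?B"
      then obtain i p q where i: "i < m" and p: "length p = i" "wk 1 h b 1 1 p"
        and q: "length q = m - 1 - i" "wk 0 h b 0 0 q" and xs: "xs = U # p @ D # q"
        by (auto simp: S_def)
      have h1: "1 \<le> h" using wk_range[OF p(2)] by simp
      have "wk 0 h b 1 1 p" using wk_mono[OF p(2)] by simp
      moreover have "wk 0 h b 1 0 (D # q)" using h1 q by simp
      ultimately have "wk 0 h b 1 0 (p @ D # q)" using wk_append by blast
      then have "wk 0 h b 0 0 xs" using xs h by simp
      moreover have "length xs = Suc m" using xs p q i by simp
      ultimately show ?thesis by (simp add: S_def)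
    qed
  qed
qed

lemma inj_UpDq: "inj_on (\<lambda>(p,q). U # p @ D # q) (S 1 h b i \<times> X)"
  by (auto simp: inj_on_def S_def dest: wk_unique)

lemma cnt_rec: assumes h: "0 \<le> h"
  shows "card (S 0 h b (Suc m)) = (if b \<or> h \<noteq> 0 then card (S 0 h b m) else 0) +
     (\<Sum>i<m. card (S 1 h b i) * card (S 0 h b (m - 1 - i)))"
proof -
  let ?f = "\<lambda>(p,q). U # p @ D # q"
  let ?A = "(if b \<or> h \<noteq> 0 then Cons H ` S 0 h b m else {})"
  let ?B = "(\<Union>i\<in>{..<m}. ?f ` (S 1 h b i \<times> S 0 h b (m - 1 - i)))"
  have fA: "finite ?A" using finite_S by auto
  have fB: "finite ?B" using finite_S by auto
  have dis: "?A \<inter> ?B = {}" by auto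
  have cA: "card ?A = (if b \<or> h \<noteq> 0 then card (S 0 h b m) else 0)"
    by (auto simp: card_image)
  have "card ?B = (\<Sum>i<m. card (?f ` (S 1 h b i \<times> S 0 h b (m - 1 - i))))"
  proof (rule card_UN_disjoint)
    show "finite {..<m}" by simp
    show "\<forall>i\<in>{..<m}. finite (?f ` (S 1 h b i \<times> S 0 h b (m - 1 - i)))" using finite_S by auto
    show "\<forall>i\<in>{..<m}. \<forall>j\<in>{..<m}. i \<noteq> j \<longrightarrow>
      ?f ` (S 1 h b i \<times> S 0 h b (m - 1 - i)) \<inter> ?f ` (S 1 h b j \<times> S 0 h b (m - 1 - j)) = {}"
      by (auto simp: S_def dest: wk_unique)
  qed
  also have "\<dots> = (\<Sum>i<m. card (S 1 h b i) * card (S 0 h b (m - 1 - i)))"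
    by (rule sum.cong) (auto simp: card_image[OF inj_UpDq] card_cartesian_product)
  finally have cB: "card ?B = \<dots>" .
  show ?thesis unfolding S_dec[OF h] card_Un_disjoint[OF fA fB dis] cA cB ..
qed

lemma S_shift: "S 1 (h + 1) b n = S 0 h b n"
  using wk_shift[of 0 1 h b 0 0] by (simp add: S_def)

lemma S_1_0: "S 1 0 b n = {}"
  by (auto simp: S_def dest: wk_range)

lemma m_count_S: "m_count n h = card (S 0 (int h) True n)"
  unfolding m_count_def S_def motzkin_def height_le_def wk_char by (rule arg_cong[of _ _ card]) auto

lemma n_count_S: "n_count n h = card (S 0 (int h) False n)"
  unfolding n_count_def S_def motzkin_def height_le_def no_hor_on_level_def wk_char
  by (rule arg_cong[of _ _ card]) auto




definition F :: "nat \<Rightarrow> bool \<Rightarrow> real fps" where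
  "F h b = Abs_fps (\<lambda>n. real (card (S 0 (int h) b n)))"

definition G :: "nat \<Rightarrow> bool \<Rightarrow> real fps" where
  "G h b = Abs_fps (\<lambda>n. real (card (S 1 (int h) b n)))"

lemma G_0: "G 0 b = 0"
  by (simp add: G_def S_1_0 fps_eq_iff)

lemma G_Suc: "G (Suc h) b = F h b"
  using S_shift[of "int h" b] by (simp add: G_def F_def add.commute)

lemma F_eq: "F h b = 1 + (if b \<or> h \<noteq> 0 then fps_X * F h b else 0) + fps_X^2 * (G h b * F h b)"
proof (rule fps_ext)
  fix n
  show "F h b $ n = (1 + (if b \<or> h \<noteq> 0 then fps_X * F h b else 0) + fps_X^2 * (G h b * F h b)) $ n"
  proof (cases n)
    case 0
    then show ?thesis by (simp add: F_def S_0 fps_X_power_mult_nth)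
  next
    case (Suc m)
    have r: "real (card (S 0 (int h) b (Suc m))) = (if b \<or> h \<noteq> 0 then real (card (S 0 (int h) b m)) else 0) +
     (\<Sum>i<m. real (card (S 1 (int h) b i)) * real (card (S 0 (int h) b (m - 1 - i))))"
      using cnt_rec[of "int h" b m] by simp
    have s: "(fps_X^2 * (G h b * F h b)) $ Suc m = (\<Sum>i<m. real (card (S 1 (int h) b i)) * real (card (S 0 (int h) b (m - 1 - i))))"
    proof (cases m)
      case 0 then show ?thesis by (simp add: fps_X_power_mult_nth)
    next
      case (Suc k)
      have "{0..k} = {..<m}" using Suc by auto
      have "(fps_X^2 * (G h b * F h b)) $ Suc m = (G h b * F h b) $ k"
        unfolding fps_X_power_mult_nth using Suc by simp
      also have "\<dots> = (\<Sum>i=0..k. G h b $ i * F h b $ (k - i))" by (rule fps_mult_nth)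
      also have "\<dots> = (\<Sum>i<m. G h b $ i * F h b $ (m - 1 - i))"
        using \<open>{0..k} = {..<m}\<close> Suc by simp
      finally show ?thesis by (simp add: G_def F_def)
    qed
    show ?thesis using r s Suc by (simp add: F_def)
  qed
qed

lemma solve:
  fixes Fh E P Dn :: "real fps"
  assumes "Fh * E = 1" "P * E = Dn" "Dn $ 0 \<noteq> 0"
  shows "Fh = P / Dn"
proof -
  have "P = Fh * Dn" using assms(1,2) by (metis mult.commute mult.left_commute mult_1_right)
  then have "P * inverse Dn = Fh * (Dn * inverse Dn)" by (simp add: mult.assoc)
  then show ?thesis using assms(3) inverse_mult_eq_1'[OF assms(3)] fps_divide_unit[OF assms(3)] by simp
qed

definition c :: "real fps" where "c = 1 + vser + vser^2"

lemma Xc: "fps_X * c = vser" using vser_props by (simp add: c_def)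

lemma Dnz: "0 < k \<Longrightarrow> (1 - vser ^ k) $ 0 \<noteq> 0"
  by (simp only: fps_sub_nth fps_power_zeroth vser_props[THEN conjunct1]) (simp add: zero_power)

definition f :: "nat \<Rightarrow> real fps" where
  "f k = c * (1 - vser^k) / (1 - vser^(k+2))"

lemma f_base1: "F 0 False = f 1"
proof -
  have "F 0 False * 1 = 1" using F_eq[of 0 False] by (simp add: G_0)
  moreover have "(c * (1 - vser^1)) * 1 = 1 - vser^(1+2)"
    by (simp add: c_def algebra_simps eval_nat_numeral)
  ultimately show ?thesis unfolding f_def by (rule solve) (rule Dnz, simp)
qed

lemma f_base2: "F 0 True = f 2"
proof -
  have "F 0 True * (1 - fps_X) = 1" using F_eq[of 0 True] by (simp add: G_0 algebra_simps)
  moreover have "(c * (1 - vser^2)) * (1 - fps_X) = 1 - vser^(2+2)"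
  proof -
    have "(c * (1 - vser^2)) * (1 - fps_X) = c * (1 - vser^2) - (fps_X * c) * (1 - vser^2)"
      by (simp add: algebra_simps)
    also have "\<dots> = 1 - vser^(2+2)" unfolding Xc by (simp add: c_def algebra_simps eval_nat_numeral)
    finally show ?thesis .
  qed
  ultimately show ?thesis unfolding f_def by (rule solve) (rule Dnz, simp)
qed

lemma f_step:
  assumes "F h b = f k"
  shows "F (Suc h) b = f (k + 2)"
proof -
  let ?v = vser
  define Dk where "Dk = 1 - ?v^(k+2)"
  have Dk0: "Dk $ 0 \<noteq> 0" unfolding Dk_def by (rule Dnz) simp
  have fk: "f k = c * (1 - ?v^k) * inverse Dk"
    unfolding f_def Dk_def[symmetric] using fps_divide_unit[OF Dk0] by simp
  define E where "E = 1 - fps_X - fps_X^2 * f k"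
  have "F (Suc h) b * E = 1" using F_eq[of "Suc h" b] by (simp add: G_Suc assms E_def algebra_simps)
  moreover have "(c * (1 - ?v^(k+2))) * E = 1 - ?v^(k+2+2)"
  proof -
    have "(c * (1 - ?v^(k+2))) * E = c * Dk - (fps_X * c) * Dk - (fps_X * c)^2 * (1 - ?v^k) * (Dk * inverse Dk)"
      by (simp add: E_def fk Dk_def algebra_simps power2_eq_square)
    also have "\<dots> = c * Dk - ?v * Dk - ?v^2 * (1 - ?v^k)"
      unfolding Xc inverse_mult_eq_1'[OF Dk0] by simp
    also have "\<dots> = 1 - ?v^(k+2+2)"
      by (simp add: c_def Dk_def algebra_simps power_add eval_nat_numeral)
    finally show ?thesis .
  qed
  ultimately show ?thesis unfolding f_def by (rule solve) (rule Dnz, simp)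
qed

lemma F_closed: "F h True = f (2*h+2) \<and> F h False = f (2*h+1)"
proof (induction h)
  case 0
  then show ?case using f_base1 f_base2 by (simp add: numeral_2_eq_2)
next
  case (Suc h)
  then show ?case using f_step[of h True "2*h+2"] f_step[of h False "2*h+1"] by simp
qed

theorem mainTheorem1:
  fixes h :: nat
  shows "Mle h = (1 + vser + vser^2) * (1 - vser^(2*h+2)) / (1 - vser^(2*h+4))
       \<and> Nle h = (1 + vser + vser^2) * (1 - vser^(2*h+1)) / (1 - vser^(2*h+3))"
proof -
  have "Mle h = F h True" by (simp add: Mle_def F_def m_count_S)
  moreover have "Nle h = F h False" by (simp add: Nle_def F_def n_count_S)
  ultimately show ?thesis using F_closed[of h] by (simp add: f_def c_def eval_nat_numeral)
qed

end
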